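(* Let $N\ge1$, $f:\mathbb{N}^N\to\mathbb{N}$, $p$ a prime and $\boldsymbol{\ell}\in\mathbb{N}^N$. Then $\binom{p}{\boldsymbol{\ell}}_f\equiv f(\mathbf{m})\pmod p$ if $\boldsymbol{\ell}=p\mathbf{m}$ for some $\mathbf{m}\in\mathbb{N}^N$, and $\binom{p}{\boldsymbol{\ell}}_f\equiv0\pmod p$ otherwise.
   Context: $\mathbb{N}=\{0,1,2,\dots\}$. For $k\ge0$ and $\mathbf{x}\in\mathbb{N}^N$, $\binom{k}{\mathbf{x}}_f=\sum_{\mathbf{m}_1+\cdots+\mathbf{m}_k=\mathbf{x}} f(\mathbf{m}_1)\cdots f(\mathbf{m}_k)$ over tuples of vectors in $\mathbb{N}^N$. *)

theory Defs
  imports "HOL-Analysis.Analysis" "HOL-Number_Theory.Number_Theory"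
begin

text \<open>Vectors in N^N are modelled as functions nat => nat vanishing outside {..<N}.\<close>
definition vecs :: "nat \<Rightarrow> (nat \<Rightarrow> nat) set" where
  "vecs N = {v. \<forall>j. N \<le> j \<longrightarrow> v j = 0}"

definition compositions :: "nat \<Rightarrow> nat \<Rightarrow> (nat \<Rightarrow> nat) \<Rightarrow> (nat \<Rightarrow> nat \<Rightarrow> nat) set" where
  "compositions N k x =
     {ms. ms \<in> {..<k} \<rightarrow>\<^sub>E vecs N \<and> (\<lambda>j. \<Sum>i<k. ms i j) = x}"

definition fbinom :: "nat \<Rightarrow> ((nat \<Rightarrow> nat) \<Rightarrow> nat) \<Rightarrow> nat \<Rightarrow> (nat \<Rightarrow> nat) \<Rightarrow> nat" where
  "fbinom N f k x = (\<Sum>ms\<in>compositions N k x. \<Prod>i<k. f (ms i))"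

end

theory Submission
  imports Defs
begin

lemma funpow_fix_mult:
  assumes "(g ^^ d) x = x"
  shows "(g ^^ (d * n)) x = x"
proof (induction n)
  case 0 then show ?case by simp
next
  case (Suc n)
  have "g ^^ (d * Suc n) = g ^^ d \<circ> g ^^ (d * n)" by (simp add: funpow_add)
  then show ?case using Suc assms by simp
qed

lemma funpow_mod:
  assumes "(g ^^ p) x = x"
  shows "(g ^^ n) x = (g ^^ (n mod p)) x"
proof -
  have "n = n mod p + p * (n div p)" by simp
  then have "(g ^^ n) x = (g ^^ (n mod p)) ((g ^^ (p * (n div p))) x)"
    by (metis comp_apply funpow_add)
  then show ?thesis using funpow_fix_mult[OF assms] by simp
qed

lemma funpow_inj:
  assumes p: "prime p" and gp: "(g ^^ p) x = x" and gx: "g x \<noteq> x"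
    and ij: "i < p" "j < p" "(g ^^ i) x = (g ^^ j) x"
  shows "i = j"
proof (rule ccontr)
  assume ne: "i \<noteq> j"
  have key: "\<exists>d. 0 < d \<and> d < p \<and> (g ^^ d) x = x" if "a < b" "b < p" "(g ^^ a) x = (g ^^ b) x" for a b
  proof -
    have "(g ^^ (p - b + a)) x = (g ^^ (p - b)) ((g ^^ a) x)" by (simp add: funpow_add)
    also have "\<dots> = (g ^^ (p - b)) ((g ^^ b) x)" using that by simp
    also have "\<dots> = (g ^^ (p - b + b)) x" by (simp add: funpow_add)
    also have "p - b + b = p" using that by simp
    finally show ?thesis using that gp by (intro exI[of _ "p - b + a"]) auto
  qed
  have "\<exists>d. 0 < d \<and> d < p \<and> (g ^^ d) x = x"
  proof (cases "i < j")
    case True then show ?thesis using key ij by blast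
  next
    case False then have "j < i" using ne by simp
    then show ?thesis using key ij by metis
  qed
  then obtain d where d: "0 < d" "d < p" "(g ^^ d) x = x" by blast
  have "\<not> p dvd d" using d by (auto dest: dvd_imp_le)
  then have "coprime p d" using p by (simp add: prime_imp_coprime)
  then have "coprime d p" by (simp add: coprime_commute)
  then have "gcd d p = 1" by simp
  from bezout_nat[of d p] d obtain a b where ab: "d * a = p * b + 1"
    using \<open>gcd d p = 1\<close> by auto
  have "(g ^^ (d * a)) x = x" using funpow_fix_mult[OF d(3)] .
  moreover have "(g ^^ (p * b + 1)) x = g ((g ^^ (p * b)) x)" by simp
  moreover have "(g ^^ (p * b)) x = x" using funpow_fix_mult[OF gp] .
  ultimately show False using ab gx by simp
qed

lemma funpow_in:
  assumes "x \<in> S" "\<forall>y\<in>S. g y \<in> S"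
  shows "(g ^^ k) x \<in> S"
  using assms by (induction k) auto

lemma funpow_w:
  assumes "x \<in> S" "\<forall>y\<in>S. g y \<in> S" "\<forall>y\<in>S. w (g y) = w y"
  shows "w ((g ^^ k) x) = w x"
  using assms
proof (induction k)
  case 0 then show ?case by simp
next
  case (Suc k)
  then show ?case using funpow_in[OF assms(1,2), of k] by simp
qed

lemma orbit_sum:
  fixes g :: "'a \<Rightarrow> 'a" and w :: "'a \<Rightarrow> nat"
  assumes p: "prime p"
  shows "finite S \<Longrightarrow> (\<forall>x\<in>S. g x \<in> S) \<Longrightarrow> (\<forall>x\<in>S. (g ^^ p) x = x) \<Longrightarrow>
    (\<forall>x\<in>S. w (g x) = w x) \<Longrightarrow> [sum w S = sum w {x\<in>S. g x = x}] (mod p)"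
proof (induction "card S" arbitrary: S rule: less_induct)
  case less
  show ?case
  proof (cases "\<exists>x\<in>S. g x \<noteq> x")
    case False
    then have "{x\<in>S. g x = x} = S" by auto
    then show ?thesis by simp
  next
    case True
    then obtain x where x: "x \<in> S" "g x \<noteq> x" by auto
    define Orb where "Orb = (\<lambda>k. (g ^^ k) x) ` {..<p}"
    have p0: "0 < p" using p prime_gt_0_nat by blast
    have gpx: "(g ^^ p) x = x" using less.prems x by auto
    have injO: "inj_on (\<lambda>k. (g ^^ k) x) {..<p}"
      by (rule inj_onI) (use funpow_inj[OF p gpx x(2)] in auto)
    have OrbS: "Orb \<subseteq> S" unfolding Orb_def using funpow_in[OF x(1)] less.prems by auto
    have xOrb: "x \<in> Orb" unfolding Orb_def using p0 by (auto intro: image_eqI[of _ _ 0])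
    define S' where "S' = S - Orb"
    have fS': "finite S'" using less.prems S'_def by auto
    have cardlt: "card S' < card S"
      unfolding S'_def using xOrb OrbS less.prems(1) by (intro psubset_card_mono) auto
    have clS': "\<forall>y\<in>S'. g y \<in> S'"
    proof
      fix y assume y: "y \<in> S'"
      show "g y \<in> S'"
      proof (rule ccontr)
        assume "g y \<notin> S'"
        then have "g y \<in> Orb" using y less.prems S'_def by auto
        then obtain k where k: "k < p" "g y = (g ^^ k) x" unfolding Orb_def by auto
        have "y = (g ^^ p) y" using less.prems y S'_def by auto
        also have "p = (p - 1) + 1" using p0 by simp
        also have "(g ^^ ((p - 1) + 1)) y = (g ^^ (p - 1)) (g y)" by (simp add: funpow_swap1)
        also have "\<dots> = (g ^^ (p - 1 + k)) x" using k by (metis comp_apply funpow_add)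
        also have "\<dots> = (g ^^ ((p - 1 + k) mod p)) x" using funpow_mod[OF gpx] by blast
        finally have "y \<in> Orb" unfolding Orb_def using p0 by auto
        then show False using y S'_def by auto
      qed
    qed
    have IH: "[sum w S' = sum w {x\<in>S'. g x = x}] (mod p)"
      using less.hyps[OF cardlt fS' clS'] less.prems S'_def by auto
    have sumOrb: "sum w Orb = p * w x"
    proof -
      have "sum w Orb = (\<Sum>k<p. w ((g ^^ k) x))" unfolding Orb_def
        by (simp add: sum.reindex[OF injO])
      also have "\<dots> = (\<Sum>k<p. w x)" using funpow_w[OF x(1) less.prems(2) less.prems(4)] by simp
      finally show ?thesis by simp
    qed
    have split: "sum w S = sum w Orb + sum w S'"
      unfolding S'_def using sum.subset_diff[OF OrbS less.prems(1), of w] by simp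
    have fixeq: "{x\<in>S. g x = x} = {x\<in>S'. g x = x}"
    proof -
      have "\<not> g y = y" if "y \<in> Orb" for y
      proof
        assume gy: "g y = y"
        from that obtain k where k: "k < p" "y = (g ^^ k) x" unfolding Orb_def by auto
        have gn: "(g ^^ n) y = y" for n using gy by (induction n) auto
        have "x = (g ^^ (p - k + k)) x" using k gpx by simp
        also have "\<dots> = (g ^^ (p - k)) y" using k(2) by (metis comp_apply funpow_add)
        also have "\<dots> = y" by (rule gn)
        finally show False using gy x(2) by simp
      qed
      then show ?thesis unfolding S'_def by auto
    qed
    show ?thesis using IH unfolding split sumOrb fixeq cong_def by simp
  qed
qed


lemma fermat_pow:
  fixes a p :: nat
  assumes "prime p"
  shows "[a ^ p = a] (mod p)"
proof (cases "p dvd a")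
  case True
  have p0: "p = Suc (p - 1)" using assms prime_gt_0_nat by simp
  have "a ^ p = a * a ^ (p - 1)" by (subst p0) simp
  then have "p dvd a ^ p" using True by simp
  then show ?thesis using True by (simp add: cong_def)
next
  case False
  have p0: "p = Suc (p - 1)" using assms prime_gt_0_nat by simp
  have "[a * a ^ (p - 1) = a * 1] (mod p)"
    using fermat_theorem[OF assms False] by (intro cong_mult) auto
  then show ?thesis by (subst p0) simp
qed

lemma reidx_sum:
  fixes h :: "nat \<Rightarrow> 'b::comm_monoid_add"
  assumes "0 < p"
  shows "(\<Sum>i<p. h (Suc i mod p)) = (\<Sum>i<p. h i)"
proof (rule sum.reindex_bij_witness[of _ "\<lambda>b. (b + p - 1) mod p" "\<lambda>a. Suc a mod p"])
  fix a assume a: "a \<in> {..<p}"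
  show "(Suc a mod p + p - 1) mod p = a"
  proof (cases "Suc a = p")
    case True
    then have "Suc a mod p = 0" by (metis mod_self)
    moreover have "(p - 1) mod p = a" using True by (metis diff_Suc_1 lessI mod_less)
    ultimately show ?thesis by simp
  next
    case False
    then have "Suc a mod p = Suc a" using a by simp
    moreover have "Suc a + p - 1 = a + p" by simp
    ultimately show ?thesis using a by simp
  qed
next
  fix b assume b: "b \<in> {..<p}"
  show "Suc ((b + p - 1) mod p) mod p = b"
  proof (cases "b = 0")
    case True
    have "(p - 1) mod p = p - 1" using assms by simp
    moreover have "Suc (p - 1) = p" using assms by simp
    ultimately show ?thesis using True by simp
  next
    case False
    have e1: "b + p - 1 = (b - 1) + p" using False by arith
    have e2: "b - 1 < p" using b by simp
    have "(b + p - 1) mod p = b - 1" unfolding e1 using e2 by simp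
    moreover have "Suc (b - 1) = b" using False by arith
    moreover have "b mod p = b" using b by simp
    ultimately show ?thesis by simp
  qed
next
  fix a assume "a \<in> {..<p}" then show "Suc a mod p \<in> {..<p}" using assms by simp
next
  fix b assume "b \<in> {..<p}" then show "(b + p - 1) mod p \<in> {..<p}" using assms by simp
qed simp

lemma reidx_prod:
  fixes h :: "nat \<Rightarrow> 'b::comm_monoid_mult"
  assumes "0 < p"
  shows "(\<Prod>i<p. h (Suc i mod p)) = (\<Prod>i<p. h i)"
proof (rule prod.reindex_bij_witness[of _ "\<lambda>b. (b + p - 1) mod p" "\<lambda>a. Suc a mod p"])
  fix a assume a: "a \<in> {..<p}"
  show "(Suc a mod p + p - 1) mod p = a"
  proof (cases "Suc a = p")
    case True
    then have "Suc a mod p = 0" by (metis mod_self)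
    moreover have "(p - 1) mod p = a" using True by (metis diff_Suc_1 lessI mod_less)
    ultimately show ?thesis by simp
  next
    case False
    then have "Suc a mod p = Suc a" using a by simp
    moreover have "Suc a + p - 1 = a + p" by simp
    ultimately show ?thesis using a by simp
  qed
next
  fix b assume b: "b \<in> {..<p}"
  show "Suc ((b + p - 1) mod p) mod p = b"
  proof (cases "b = 0")
    case True
    have "(p - 1) mod p = p - 1" using assms by simp
    moreover have "Suc (p - 1) = p" using assms by simp
    ultimately show ?thesis using True by simp
  next
    case False
    have e1: "b + p - 1 = (b - 1) + p" using False by arith
    have e2: "b - 1 < p" using b by simp
    have "(b + p - 1) mod p = b - 1" unfolding e1 using e2 by simp
    moreover have "Suc (b - 1) = b" using False by arith
    moreover have "b mod p = b" using b by simp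
    ultimately show ?thesis by simp
  qed
next
  fix a assume "a \<in> {..<p}" then show "Suc a mod p \<in> {..<p}" using assms by simp
next
  fix b assume "b \<in> {..<p}" then show "(b + p - 1) mod p \<in> {..<p}" using assms by simp
qed simp

definition rotp :: "nat \<Rightarrow> (nat \<Rightarrow> 'a) \<Rightarrow> nat \<Rightarrow> 'a" where
  "rotp p ms = (\<lambda>i. if i < p then ms (Suc i mod p) else undefined)"

lemma rotp_iter:
  assumes "ms \<in> {..<p} \<rightarrow>\<^sub>E V"
  shows "(rotp p ^^ k) ms = (\<lambda>i. if i < p then ms ((i + k) mod p) else undefined)"
proof (induction k)
  case 0
  show ?case
  proof (rule ext)
    fix i show "(rotp p ^^ 0) ms i = (if i < p then ms ((i + 0) mod p) else undefined)"
      using PiE_arb[OF assms, of i] by (cases "i < p") simp_all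
  qed
next
  case (Suc k)
  show ?case
  proof (rule ext)
    fix i
    have e0: "(rotp p ^^ Suc k) ms i = rotp p ((rotp p ^^ k) ms) i" by (simp only: funpow.simps comp_apply)
    show "(rotp p ^^ Suc k) ms i = (if i < p then ms ((i + Suc k) mod p) else undefined)"
    proof (cases "i < p")
      case True
      have lt: "Suc i mod p < p" using True by simp
      have "rotp p ((rotp p ^^ k) ms) i = (rotp p ^^ k) ms (Suc i mod p)"
        using True unfolding rotp_def by simp
      also have "\<dots> = ms ((Suc i mod p + k) mod p)" unfolding Suc using lt by simp
      also have "(Suc i mod p + k) mod p = (i + Suc k) mod p"
        by (metis add_Suc add_Suc_right mod_add_left_eq)
      finally show ?thesis using e0 True by simp
    next
      case False
      then show ?thesis using e0 unfolding rotp_def by simp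
    qed
  qed
qed

lemma rotp_fix:
  assumes "ms \<in> {..<p} \<rightarrow>\<^sub>E V" and "rotp p ms = ms"
  shows "ms = (\<lambda>i. if i < p then ms 0 else undefined)"
proof -
  have "\<forall>i. i < p \<longrightarrow> ms i = ms 0"
  proof
    fix i show "i < p \<longrightarrow> ms i = ms 0"
    proof (induction i)
      case (Suc i)
      show ?case
      proof
        assume si: "Suc i < p"
        have "ms i = rotp p ms i" using assms(2) by simp
        also have "\<dots> = ms (Suc i)" using si by (simp add: rotp_def)
        finally show "ms (Suc i) = ms 0" using Suc si by simp
      qed
    qed simp
  qed
  then show ?thesis
  proof -
    assume h: "\<forall>i. i < p \<longrightarrow> ms i = ms 0"
    show ?thesis
    proof (rule ext)
      fix i show "ms i = (if i < p then ms 0 else undefined)"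
      proof (cases "i < p")
        case True then show ?thesis using h[rule_format, OF True] by simp
      next
        case False then show ?thesis using PiE_arb[OF assms(1), of i] by simp
      qed
    qed
  qed
qed

lemma finite_compositions:
  assumes "l \<in> vecs N"
  shows "finite (compositions N p l)"
proof -
  define B where "B = {v. \<forall>j. v j \<le> l j} \<inter> vecs N"
  have "inj_on (\<lambda>v. restrict v {..<N}) B"
  proof (rule inj_onI)
    fix u v assume uv: "u \<in> B" "v \<in> B" "restrict u {..<N} = restrict v {..<N}"
    show "u = v"
    proof
      fix j
      have r: "restrict u {..<N} j = restrict v {..<N} j" using uv(3) by simp
      show "u j = v j"
        using uv(1,2) r by (cases "j < N") (auto simp: B_def vecs_def)
    qed
  qed
  moreover have img: "(\<lambda>v. restrict v {..<N}) ` B \<subseteq> PiE {..<N} (\<lambda>j. {..l j})"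
  proof
    fix r assume "r \<in> (\<lambda>v. restrict v {..<N}) ` B"
    then obtain v where v: "v \<in> B" "r = restrict v {..<N}" by blast
    then show "r \<in> PiE {..<N} (\<lambda>j. {..l j})" by (simp add: restrict_PiE_iff B_def)
  qed
  moreover have "finite (PiE {..<N} (\<lambda>j. {..l j}))" by (intro finite_PiE) auto
  ultimately have fB: "finite B"
    using finite_imageD finite_subset by metis
  have "compositions N p l \<subseteq> {..<p} \<rightarrow>\<^sub>E B"
  proof
    fix ms assume ms: "ms \<in> compositions N p l"
    then have m1: "ms \<in> {..<p} \<rightarrow>\<^sub>E vecs N" and m2: "\<And>j. (\<Sum>i<p. ms i j) = l j"
      by (auto simp: compositions_def dest: fun_cong)
    have "ms i j \<le> l j" if "i < p" for i j
      using member_le_sum[of i "{..<p}" "\<lambda>i. ms i j"] that m2[of j] by simp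
    then show "ms \<in> {..<p} \<rightarrow>\<^sub>E B" using m1 by (auto simp: B_def)
  qed
  moreover have "finite ({..<p} \<rightarrow>\<^sub>E B)" using fB by (intro finite_PiE) auto
  ultimately show ?thesis by (rule finite_subset)
qed

theorem theorem6:
  fixes N p :: nat and f :: "(nat \<Rightarrow> nat) \<Rightarrow> nat" and l :: "nat \<Rightarrow> nat"
  assumes "N \<ge> 1" and "prime p" and "l \<in> vecs N"
  shows "(\<forall>m\<in>vecs N. l = (\<lambda>j. p * m j) \<longrightarrow> [fbinom N f p l = f m] (mod p))
       \<and> ((\<not> (\<exists>m\<in>vecs N. l = (\<lambda>j. p * m j))) \<longrightarrow> [fbinom N f p l = 0] (mod p))"
proof -
  define C where "C = compositions N p l"
  define w where "w = (\<lambda>ms. \<Prod>i<p. f (ms i))"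
  define cst where "cst = (\<lambda>m::nat\<Rightarrow>nat. \<lambda>i::nat. if i < p then m else undefined)"
  have p0: "0 < p" using assms(2) prime_gt_0_nat by blast
  have memC: "ms \<in> C \<longleftrightarrow> ms \<in> {..<p} \<rightarrow>\<^sub>E vecs N \<and> (\<forall>j. (\<Sum>i<p. ms i j) = l j)" for ms
    by (auto simp: C_def compositions_def)
  have fC: "finite C" unfolding C_def using finite_compositions[OF assms(3)] .
  have clos: "\<forall>ms\<in>C. rotp p ms \<in> C"
  proof
    fix ms assume ms: "ms \<in> C"
    have "rotp p ms \<in> {..<p} \<rightarrow>\<^sub>E vecs N" using ms p0
      by (auto simp: memC rotp_def PiE_def extensional_def Pi_def)
    moreover have "(\<Sum>i<p. rotp p ms i j) = l j" for j
    proof -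
      have "(\<Sum>i<p. rotp p ms i j) = (\<Sum>i<p. ms (Suc i mod p) j)"
        by (rule sum.cong) (auto simp: rotp_def)
      also have "\<dots> = (\<Sum>i<p. ms i j)" using reidx_sum[OF p0, of "\<lambda>i. ms i j"] .
      finally show ?thesis using ms memC by simp
    qed
    ultimately show "rotp p ms \<in> C" by (simp add: memC)
  qed
  have per: "\<forall>ms\<in>C. (rotp p ^^ p) ms = ms"
  proof
    fix ms assume ms: "ms \<in> C"
    then have pe: "ms \<in> {..<p} \<rightarrow>\<^sub>E vecs N" by (simp add: memC)
    show "(rotp p ^^ p) ms = ms"
      unfolding rotp_iter[OF pe]
    proof (rule ext)
      fix i show "(if i < p then ms ((i + p) mod p) else undefined) = ms i"
        using PiE_arb[OF pe, of i] by (cases "i < p") simp_all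
    qed
  qed
  have winv: "\<forall>ms\<in>C. w (rotp p ms) = w ms"
  proof
    fix ms assume "ms \<in> C"
    have "w (rotp p ms) = (\<Prod>i<p. f (ms (Suc i mod p)))"
      unfolding w_def by (rule prod.cong) (auto simp: rotp_def)
    also have "\<dots> = w ms" unfolding w_def using reidx_prod[OF p0, of "\<lambda>i. f (ms i)"] .
    finally show "w (rotp p ms) = w ms" .
  qed
  have main: "[fbinom N f p l = sum w {ms\<in>C. rotp p ms = ms}] (mod p)"
    using orbit_sum[OF assms(2) fC clos per winv] by (simp add: fbinom_def C_def w_def)
  have fixchar: "ms \<in> {ms\<in>C. rotp p ms = ms} \<longleftrightarrow>
      (\<exists>m\<in>vecs N. l = (\<lambda>j. p * m j) \<and> ms = cst m)" for ms
  proof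
    assume "ms \<in> {ms\<in>C. rotp p ms = ms}"
    then have ms: "ms \<in> C" "rotp p ms = ms" by auto
    then have pe: "ms \<in> {..<p} \<rightarrow>\<^sub>E vecs N" by (simp add: memC)
    have eq: "ms = cst (ms 0)" using rotp_fix[OF pe ms(2)] by (simp add: cst_def)
    have v: "ms 0 \<in> vecs N" using pe p0 by auto
    have "(\<Sum>i<p. ms i j) = p * ms 0 j" for j
      by (subst eq) (simp add: cst_def)
    then have "l = (\<lambda>j. p * ms 0 j)" using ms(1) memC by auto
    then show "\<exists>m\<in>vecs N. l = (\<lambda>j. p * m j) \<and> ms = cst m" using v eq by blast
  next
    assume "\<exists>m\<in>vecs N. l = (\<lambda>j. p * m j) \<and> ms = cst m"
    then obtain m where m: "m \<in> vecs N" "l = (\<lambda>j. p * m j)" "ms = cst m" by blast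
    have "ms \<in> C" using m p0 by (auto simp: memC cst_def PiE_def extensional_def)
    moreover have "rotp p ms = ms" using m p0 by (auto simp: rotp_def cst_def)
    ultimately show "ms \<in> {ms\<in>C. rotp p ms = ms}" by simp
  qed
  show ?thesis
  proof (intro conjI ballI impI)
    fix m assume m: "m \<in> vecs N" "l = (\<lambda>j. p * m j)"
    have uniq: "m' = m" if "l = (\<lambda>j. p * m' j)" for m'
    proof
      fix j show "m' j = m j" using fun_cong[OF that, of j] fun_cong[OF m(2), of j] p0 by simp
    qed
    have "{ms\<in>C. rotp p ms = ms} = {cst m}"
      using fixchar uniq m by blast
    moreover have "w (cst m) = f m ^ p" by (simp add: w_def cst_def)
    ultimately show "[fbinom N f p l = f m] (mod p)"
      using main fermat_pow[OF assms(2), of "f m"] by (simp add: cong_def)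
  next
    assume "\<not> (\<exists>m\<in>vecs N. l = (\<lambda>j. p * m j))"
    then have e: "{ms\<in>C. rotp p ms = ms} = {}" using fixchar by blast
    show "[fbinom N f p l = 0] (mod p)" using main unfolding e sum.empty .
  qed
qed

end
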